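(* Let $e_0,e_1\ge0$ be integers and let $\mathbf{x}_1,\mathbf{x}_2\in\mathbb{F}_2^n$ be such that $(\mathbf{x}_1,\mathbf{x}_2)$ are $(e_0+e_1,e_0+e_1)$-close. Then there exists a vector $\mathbf{y}\in\mathbb{F}_2^n$ such that both $(\mathbf{x}_1,\mathbf{y})$ and $(\mathbf{x}_2,\mathbf{y})$ are $(e_0,e_1)$-close.
   Context: For $\mathbf{x}\in\mathbb{F}_2^n$, $\mathrm{supp}(\mathbf{x})$ is the set of coordinates where $\mathbf{x}$ is $1$. For $\mathbf{x},\mathbf{y}\in\mathbb{F}_2^n$, the ordered pair $(\mathbf{x},\mathbf{y})$ is called $(e_0,e_1)$-far iff $|\mathrm{supp}(\mathbf{y})\setminus\mathrm{supp}(\mathbf{x})|>e_0$ or $|\mathrm{supp}(\mathbf{x})\setminus\mathrm{supp}(\mathbf{y})|>e_1$; otherwise $(\mathbf{x},\mathbf{y})$ is $(e_0,e_1)$-close. *)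

theory Defs
  imports Main
begin

text \<open>A vector of F_2^n is represented as a boolean list of length n
  (True = 1, False = 0). Coordinates are 0..n-1.\<close>

definition supp :: "bool list \<Rightarrow> nat set" where
  "supp x = {i. i < length x \<and> x ! i}"

definition far :: "nat \<Rightarrow> nat \<Rightarrow> bool list \<Rightarrow> bool list \<Rightarrow> bool" where
  "far e0 e1 x y \<longleftrightarrow> card (supp y - supp x) > e0 \<or> card (supp x - supp y) > e1"

definition close :: "nat \<Rightarrow> nat \<Rightarrow> bool list \<Rightarrow> bool list \<Rightarrow> bool" where
  "close e0 e1 x y \<longleftrightarrow> \<not> far e0 e1 x y"

end

theory Submission
  imports Defs
begin

lemma supp_sub: "supp x \<subseteq> {..<length x}"
  unfolding supp_def by auto

lemma supp_map: "supp (map (\<lambda>i. i \<in> Y) [0..<n]) = Y \<inter> {..<n}"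
  unfolding supp_def by auto

theorem lemma1:
  fixes e0 e1 n :: nat and x1 x2 :: "bool list"
  assumes "length x1 = n" and "length x2 = n"
    and "close (e0 + e1) (e0 + e1) x1 x2"
  shows "\<exists>y. length y = n \<and> close e0 e1 x1 y \<and> close e0 e1 x2 y"
proof -
  define S1 where "S1 = supp x1"
  define S2 where "S2 = supp x2"
  have s1: "S1 \<subseteq> {..<n}" and s2: "S2 \<subseteq> {..<n}"
    using supp_sub[of x1] supp_sub[of x2] assms(1,2) unfolding S1_def S2_def by auto
  have f1: "finite S1" and f2: "finite S2" using s1 s2 finite_subset by auto
  define A where "A = S1 - S2"
  define B where "B = S2 - S1"
  have cA: "card A \<le> e0 + e1" and cB: "card B \<le> e0 + e1"
    using assms(3) unfolding close_def far_def A_def B_def S1_def S2_def by auto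
  have fA: "finite A" and fB: "finite B" using f1 f2 A_def B_def by auto
  obtain A' where A': "A' \<subseteq> A" "card A' = min (card A) e0"
    using obtain_subset_with_card_n[of "min (card A) e0" A] by auto
  obtain B' where B': "B' \<subseteq> B" "card B' = min (card B) e0"
    using obtain_subset_with_card_n[of "min (card B) e0" B] by auto
  define Y where "Y = (S1 \<inter> S2) \<union> A' \<union> B'"
  have Ysub: "Y \<subseteq> {..<n}" using s1 s2 A' B' unfolding Y_def A_def B_def by auto
  define y where "y = map (\<lambda>i. i \<in> Y) [0..<n]"
  have sy: "supp y = Y" using supp_map[of Y n] Ysub unfolding y_def by auto
  have e1: "Y - S1 = B'" using A' B' unfolding Y_def A_def B_def by auto
  have e2: "S1 - Y = A - A'" using A' B' unfolding Y_def A_def B_def by auto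
  have e3: "Y - S2 = A'" using A' B' unfolding Y_def A_def B_def by auto
  have e4: "S2 - Y = B - B'" using A' B' unfolding Y_def A_def B_def by auto
  have c2: "card (A - A') = card A - card A'" using A' fA by (meson card_Diff_subset finite_subset)
  have c4: "card (B - B') = card B - card B'" using B' fB by (meson card_Diff_subset finite_subset)
  show ?thesis
    apply (rule exI[of _ y])
    unfolding close_def far_def sy S1_def[symmetric] S2_def[symmetric] e1 e2 e3 e4 c2 c4
    using A'(2) B'(2) cA cB by (auto simp: y_def)
qed

end
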